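(* Let $F:\mathbb{R}^d\to\mathbb{R}^d$ be $L$-Lipschitz, $G:\mathbb{R}^d\rightrightarrows\mathbb{R}^d$ maximally monotone, the solution set of $0\in F(x)+G(x)$ nonempty, and suppose there is a nonempty subset of solutions each element $x^\star$ of which satisfies the $\rho$-weak MVI: $\langle u,x-x^\star\rangle\ge-\rho\|u\|^2$ for all $(x,u)$ in the graph of $F+G$, where $\rho>0$. Let $\eta<\frac1L$ and suppose $\rho<\eta$. Let $x^\star$ be such a solution and $(x_k)$ be generated by the inexact KM iteration in the context. Then for any $K\ge1$, $$\frac1K\sum_{k=0}^{K-1}\frac1{\eta^2}\|x_k-J_{\eta(F+G)}(x_k)\|^2\le\frac{11\|x_0-x^\star\|^2}{(\eta-\rho)^2K}.$$ The number of first-order oracle calls used at iteration $k$ is at most $2N_k$, where $N_k=\left\lceil\frac{4(1+\eta L)}{1-\eta L}\log\big(8(k+1)\log^2(k+2)\big)\right\rceil$.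
   Context: For an operator $A$, $J_A=(\mathrm{Id}+A)^{-1}$. A first-order oracle call is one evaluation of $F$ and one resolvent of (a positive multiple of) $G$. Subroutine FBF$(z_0,N,A,B_{\mathrm{in}},L_B)$: $\tau=\frac{1}{2L_B}$, $B(\cdot)=B_{\mathrm{in}}(\cdot)-z_0$; for $t=0,\dots,N-1$: $z_{t+1/2}=J_{\tau A}(z_t-\tau B(z_t))$, $z_{t+1}=z_{t+1/2}+\tau B(z_t)-\tau B(z_{t+1/2})$; output $z_N$. Inexact KM iteration: given $x_0\in\mathbb{R}^d$, $\alpha=1-\frac\rho\eta$; for $k=0,\dots,K-1$: $\widetilde J_{\eta(F+G)}(x_k)=\mathrm{FBF}(x_k,N_k,\eta G,\mathrm{Id}+\eta F,1+\eta L)$ with $N_k=\left\lceil\frac{4(1+\eta L)}{1-\eta L}\log(8(k+1)\log^2(k+2))\right\rceil$, and $x_{k+1}=(1-\alpha)x_k+\alpha\widetilde J_{\eta(F+G)}(x_k)$. *)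

theory Defs
  imports "HOL-Analysis.Analysis"
begin

text \<open>Set-valued operators on a Euclidean space are modelled as functions
  'a => 'a set; the graph of A is the set of pairs (x,u) with u in A x.\<close>

definition monotone_op :: "('a::real_inner \<Rightarrow> 'a set) \<Rightarrow> bool" where
  "monotone_op A \<longleftrightarrow>
     (\<forall>x y u v. u \<in> A x \<longrightarrow> v \<in> A y \<longrightarrow> inner (u - v) (x - y) \<ge> 0)"

definition maximal_monotone :: "('a::real_inner \<Rightarrow> 'a set) \<Rightarrow> bool" where
  "maximal_monotone A \<longleftrightarrow> monotone_op A \<and>
     (\<forall>B. monotone_op B \<and> (\<forall>x. A x \<subseteq> B x) \<longrightarrow> B = A)"

definition sum_op :: "('a::real_vector \<Rightarrow> 'a) \<Rightarrow> ('a \<Rightarrow> 'a set) \<Rightarrow> 'a \<Rightarrow> 'a set" where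
  "sum_op F G x = (\<lambda>v. F x + v) ` G x"

definition scale_op :: "real \<Rightarrow> ('a::real_vector \<Rightarrow> 'a set) \<Rightarrow> 'a \<Rightarrow> 'a set" where
  "scale_op c A x = (\<lambda>v. c *\<^sub>R v) ` A x"

text \<open>Resolvent J_A = (Id + A)^{-1}, read as a (single-valued) function:
  J_A x is the unique z with x \<in> z + A z.\<close>
definition resolvent :: "('a::real_vector \<Rightarrow> 'a set) \<Rightarrow> 'a \<Rightarrow> 'a" where
  "resolvent A x = (THE z. x - z \<in> A z)"

text \<open>One step of FBF(z0, N, A, B_in, L_B), tracking the iterate together with the
  number of evaluations of F (via B) and the number of resolvent evaluations so far.
  Each step evaluates B at z_t (once, reused) and at z_{t+1/2}, and one resolvent.\<close>
definition fbf_step :: "'a::real_vector \<Rightarrow> ('a \<Rightarrow> 'a set) \<Rightarrow> ('a \<Rightarrow> 'a) \<Rightarrow> real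
    \<Rightarrow> 'a \<times> nat \<times> nat \<Rightarrow> 'a \<times> nat \<times> nat" where
  "fbf_step z0 A Bin LB s =
     (let \<tau> = 1 / (2 * LB);
          B = (\<lambda>w. Bin w - z0);
          z = fst s;
          Bz = B z;
          zh = resolvent (scale_op \<tau> A) (z - \<tau> *\<^sub>R Bz)
      in (zh + \<tau> *\<^sub>R Bz - \<tau> *\<^sub>R B zh, fst (snd s) + 2, snd (snd s) + 1))"

definition fbf_run :: "'a::real_vector \<Rightarrow> nat \<Rightarrow> ('a \<Rightarrow> 'a set) \<Rightarrow> ('a \<Rightarrow> 'a) \<Rightarrow> real
    \<Rightarrow> 'a \<times> nat \<times> nat" where
  "fbf_run z0 N A Bin LB = (fbf_step z0 A Bin LB ^^ N) (z0, 0, 0)"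

definition FBF :: "'a::real_vector \<Rightarrow> nat \<Rightarrow> ('a \<Rightarrow> 'a set) \<Rightarrow> ('a \<Rightarrow> 'a) \<Rightarrow> real \<Rightarrow> 'a" where
  "FBF z0 N A Bin LB = fst (fbf_run z0 N A Bin LB)"

text \<open>Number of first-order oracle calls used by FBF: one call provides one
  evaluation of F and one resolvent, so the count is the maximum of the two tallies.\<close>
definition FBF_oracle_calls :: "'a::real_vector \<Rightarrow> nat \<Rightarrow> ('a \<Rightarrow> 'a set) \<Rightarrow> ('a \<Rightarrow> 'a) \<Rightarrow> real \<Rightarrow> nat" where
  "FBF_oracle_calls z0 N A Bin LB =
     (let s = fbf_run z0 N A Bin LB in max (fst (snd s)) (snd (snd s)))"

definition N_inner :: "real \<Rightarrow> real \<Rightarrow> nat \<Rightarrow> nat" where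
  "N_inner \<eta> L k = nat \<lceil>4 * (1 + \<eta> * L) / (1 - \<eta> * L)
                        * ln (8 * real (k + 1) * (ln (real (k + 2)))\<^sup>2)\<rceil>"

end

theory Submission
  imports Defs "HOL-Analysis.Harmonic_Numbers"
begin


lemma finite_minty_sum:
  fixes P :: "('a::real_inner \<times> 'a) set" and \<mu> :: "'a \<times> 'a \<Rightarrow> real"
  assumes fin: "finite P" and mon: "\<forall>p\<in>P. \<forall>q\<in>P. inner (snd p - snd q) (fst p - fst q) \<ge> 0"
    and mu0: "\<forall>p\<in>P. \<mu> p \<ge> 0" and mu1: "sum \<mu> P = 1"
  shows "inner (\<Sum>p\<in>P. \<mu> p *\<^sub>R fst p) (\<Sum>p\<in>P. \<mu> p *\<^sub>R snd p)
          - (\<Sum>p\<in>P. \<mu> p * inner (snd p) (fst p)) \<le> 0"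
proof -
  define X where "X = (\<Sum>p\<in>P. \<mu> p *\<^sub>R fst p)"
  define W where "W = (\<Sum>p\<in>P. \<mu> p *\<^sub>R snd p)"
  have Xp: "X - fst p = (\<Sum>q\<in>P. \<mu> q *\<^sub>R (fst q - fst p))" for p
  proof -
    have "(\<Sum>q\<in>P. \<mu> q *\<^sub>R (fst q - fst p)) = X - (\<Sum>q\<in>P. \<mu> q) *\<^sub>R fst p"
      by (simp add: X_def scaleR_diff_right sum_subtractf scaleR_sum_left)
    then show ?thesis using mu1 by simp
  qed
  have "inner X W - (\<Sum>p\<in>P. \<mu> p * inner (snd p) (fst p))
        = (\<Sum>p\<in>P. \<mu> p * inner (snd p) X) - (\<Sum>p\<in>P. \<mu> p * inner (snd p) (fst p))"
    by (simp add: W_def inner_sum_right inner_sum_left inner_commute)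
  also have "\<dots> = (\<Sum>p\<in>P. \<mu> p * inner (snd p) (X - fst p))"
    by (simp add: inner_diff_right right_diff_distrib sum_subtractf)
  also have "\<dots> = (\<Sum>p\<in>P. \<Sum>q\<in>P. \<mu> p * \<mu> q * inner (snd p) (fst q - fst p))"
    by (simp add: Xp inner_sum_right sum_distrib_left mult.assoc)
  finally have S1: "inner X W - (\<Sum>p\<in>P. \<mu> p * inner (snd p) (fst p))
      = (\<Sum>p\<in>P. \<Sum>q\<in>P. \<mu> p * \<mu> q * inner (snd p) (fst q - fst p))" .
  have S2: "(\<Sum>p\<in>P. \<Sum>q\<in>P. \<mu> p * \<mu> q * inner (snd p) (fst q - fst p))
      = (\<Sum>p\<in>P. \<Sum>q\<in>P. \<mu> p * \<mu> q * inner (snd q) (fst p - fst q))"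
    by (subst sum.swap) (simp add: mult.commute)
  have S3: "(\<Sum>p\<in>P. \<Sum>q\<in>P. \<mu> p * \<mu> q * inner (snd p) (fst q - fst p))
          + (\<Sum>p\<in>P. \<Sum>q\<in>P. \<mu> p * \<mu> q * inner (snd q) (fst p - fst q))
      = - (\<Sum>p\<in>P. \<Sum>q\<in>P. \<mu> p * \<mu> q * inner (snd p - snd q) (fst p - fst q))"
    by (simp add: sum.distrib[symmetric] sum_negf[symmetric] algebra_simps inner_diff_left inner_diff_right)
  have S4: "(\<Sum>p\<in>P. \<Sum>q\<in>P. \<mu> p * \<mu> q * inner (snd p - snd q) (fst p - fst q)) \<ge> 0"
    using mon mu0 by (intro sum_nonneg) auto
  show ?thesis using S1 S2 S3 S4 unfolding X_def[symmetric] W_def[symmetric] by linarith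
qed


lemma finite_minty:
  fixes P :: "('a::euclidean_space \<times> 'a) set"
  assumes fin: "finite P" and ne: "P \<noteq> {}"
    and mon: "\<forall>p\<in>P. \<forall>q\<in>P. inner (snd p - snd q) (fst p - fst q) \<ge> 0"
  shows "\<exists>z. \<forall>p\<in>P. inner (z + snd p) (z - fst p) \<le> 0"
proof -
  define g :: "'a \<times> 'a \<Rightarrow> 'a \<times> 'a \<times> real" where
    "g p = (fst p, snd p, inner (snd p) (fst p))" for p
  define H where "H = convex hull (g ` P)"
  define h :: "'a \<times> 'a \<times> real \<Rightarrow> real" where
    "h m = - (norm (fst (snd m) - fst m))\<^sup>2 / 4 - snd (snd m)" for m
  have injg: "inj_on g P" unfolding g_def by (auto simp: inj_on_def prod_eq_iff)
  have Hc: "compact H" unfolding H_def using fin by (simp add: compact_convex_hull finite_imp_compact)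
  have Hne: "H \<noteq> {}" unfolding H_def using ne by simp
  have hc: "continuous_on H h" unfolding h_def by (intro continuous_intros) auto
  obtain m where mH: "m \<in> H" and mmax: "\<forall>y\<in>H. h y \<le> h m"
    using continuous_attains_sup[OF Hc Hne hc] by blast
  have hle0: "h y \<le> 0" if yH: "y \<in> H" for y
  proof -
    from yH obtain u where u0: "\<forall>x\<in>g ` P. 0 \<le> u x" and u1: "sum u (g ` P) = 1"
      and uy: "(\<Sum>x\<in>g ` P. u x *\<^sub>R x) = y"
      unfolding H_def using convex_hull_finite[of "g ` P"] fin by auto
    define \<mu> where "\<mu> p = u (g p)" for p
    have mu0: "\<forall>p\<in>P. \<mu> p \<ge> 0" using u0 by (simp add: \<mu>_def)
    have mu1: "sum \<mu> P = 1" using u1 by (simp add: sum.reindex[OF injg] \<mu>_def)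
    have yy: "y = (\<Sum>p\<in>P. \<mu> p *\<^sub>R g p)" using uy by (simp add: sum.reindex[OF injg] \<mu>_def)
    define X where "X = (\<Sum>p\<in>P. \<mu> p *\<^sub>R fst p)"
    define W where "W = (\<Sum>p\<in>P. \<mu> p *\<^sub>R snd p)"
    define b where "b = (\<Sum>p\<in>P. \<mu> p * inner (snd p) (fst p))"
    have fy: "fst y = X" unfolding yy X_def g_def by (simp add: fst_sum)
    have fsy: "fst (snd y) = W" unfolding yy W_def g_def by (simp add: snd_sum fst_sum)
    have ssy: "snd (snd y) = b" unfolding yy b_def g_def by (simp add: snd_sum)
    have key: "inner X W - b \<le> 0" unfolding X_def W_def b_def
      by (rule finite_minty_sum[OF fin mon mu0 mu1])
    have "0 \<le> (norm (X + (1/2) *\<^sub>R (W - X)))\<^sup>2" by simp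
    also have "\<dots> = inner X W + (norm (W - X))\<^sup>2 / 4"
      by (simp add: power2_norm_eq_inner inner_add_left inner_add_right inner_diff_left inner_diff_right inner_commute field_simps)
    finally show ?thesis unfolding h_def fy fsy ssy using key by linarith
  qed
  define A where "A = fst (snd m) - fst m"
  define z where "z = - (1/2) *\<^sub>R A"
  have "inner (z + snd p) (z - fst p) \<le> h m" if pP: "p \<in> P" for p
  proof (rule ccontr)
    assume nh: "\<not> inner (z + snd p) (z - fst p) \<le> h m"
    define \<gamma> where "\<gamma> = inner (z + snd p) (z - fst p) - h m"
    have gpos: "\<gamma> > 0" using nh by (simp add: \<gamma>_def)
    define a where "a = snd p - fst p"
    define c where "c = (norm (a - A))\<^sup>2 / 4"
    have c0: "c \<ge> 0" by (simp add: c_def)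
    define s where "s = \<gamma> / (c + \<gamma>)"
    have s0: "0 < s" "s \<le> 1" using gpos c0 by (auto simp: s_def)
    have msH: "(1 - s) *\<^sub>R m + s *\<^sub>R g p \<in> H"
      unfolding H_def using mH[unfolded H_def] pP s0
      by (intro convexD[OF convex_convex_hull]) (auto intro: hull_inc)
    define ms where "ms = (1 - s) *\<^sub>R m + s *\<^sub>R g p"
    have e1: "fst (snd ms) - fst ms = A + s *\<^sub>R (a - A)"
      by (simp add: ms_def g_def A_def a_def algebra_simps)
    have e2: "snd (snd ms) = snd (snd m) + s * (inner (snd p) (fst p) - snd (snd m))"
      by (simp add: ms_def g_def algebra_simps)
    have e3: "(norm (A + s *\<^sub>R (a - A)))\<^sup>2 = (norm A)\<^sup>2 + 2 * s * inner A (a - A) + s\<^sup>2 * (norm (a - A))\<^sup>2"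
      by (simp only: power2_norm_eq_inner) (simp add: inner_add_left inner_add_right inner_diff_left inner_diff_right inner_commute algebra_simps power2_eq_square)
    have e4: "inner (z + snd p) (z - fst p) = (norm A)\<^sup>2 / 4 - inner A a / 2 - inner (snd p) (fst p)"
      by (simp add: z_def a_def power2_norm_eq_inner inner_add_left inner_add_right inner_diff_left
          inner_diff_right inner_commute field_simps)
    have e5: "inner A (a - A) = inner A a - (norm A)\<^sup>2" by (simp add: inner_diff_right power2_norm_eq_inner)
    have hs: "h ms = h m + s * \<gamma> - s\<^sup>2 * c"
      unfolding h_def e1 e2 e3 \<gamma>_def e4 c_def A_def[symmetric] e5
      by (simp add: field_simps)
    have "s * \<gamma> - s\<^sup>2 * c = s * (\<gamma> - s * c)" by (simp add: power2_eq_square algebra_simps)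
    also have "\<gamma> - s * c = \<gamma> * \<gamma> / (c + \<gamma>)" using gpos c0
      by (simp add: s_def field_simps)
    finally have "s * \<gamma> - s\<^sup>2 * c > 0" using gpos c0 s0 by simp
    then show False using mmax msH hs unfolding ms_def[symmetric] by force
  qed
  then have "\<forall>p\<in>P. inner (z + snd p) (z - fst p) \<le> 0" using hle0[OF mH] by force
  then show ?thesis by blast
qed


lemma mm_nonempty:
  assumes mm: "maximal_monotone (G :: 'a::real_inner \<Rightarrow> 'a set)"
  shows "\<exists>x0 u0. u0 \<in> G x0"
proof (rule ccontr)
  assume "\<not> ?thesis" then have empty: "\<forall>x. G x = {}" by auto
  define B where "B = (\<lambda>x::'a. if x = 0 then {0::'a} else {})"
  have "monotone_op B" by (auto simp: monotone_op_def B_def)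
  then have "B = G" using mm empty by (auto simp: maximal_monotone_def)
  then have "B 0 = G 0" by simp
  then show False using empty by (simp add: B_def)
qed

lemma minty:
  fixes G :: "'a::euclidean_space \<Rightarrow> 'a set"
  assumes mm: "maximal_monotone G" and c0: "c > 0"
  shows "\<exists>z. y - z \<in> scale_op c G z"
proof -
  have mon: "monotone_op G" using mm by (simp add: maximal_monotone_def)
  obtain x0 u0 where u0: "u0 \<in> G x0" using mm_nonempty[OF mm] by blast
  define f where "f x u z = inner (z + c *\<^sub>R u - y) (z - x)" for x u z
  define K where "K = {z. f x0 u0 z \<le> 0}"
  have fcont: "continuous_on UNIV (f x u)" for x u unfolding f_def by (intro continuous_intros)
  have Kclosed: "closed K" unfolding K_def
    by (rule closed_Collect_le[OF fcont continuous_on_const])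
  define w0 where "w0 = c *\<^sub>R u0 - y"
  define a where "a = norm (x0 - w0)"
  define b where "b = \<bar>inner w0 x0\<bar>"
  have Kbd: "norm z \<le> a + b + 1" if "z \<in> K" for z
  proof -
    have "f x0 u0 z = (norm z)\<^sup>2 - inner z (x0 - w0) - inner w0 x0"
      by (simp add: f_def w0_def power2_norm_eq_inner inner_add_left inner_diff_left inner_diff_right inner_commute algebra_simps)
    moreover have "inner z (x0 - w0) \<le> norm z * a" unfolding a_def by (rule norm_cauchy_schwarz)
    moreover have "inner w0 x0 \<le> b" unfolding b_def by simp
    ultimately have q: "(norm z)\<^sup>2 \<le> norm z * a + b" using that unfolding K_def by auto
    show ?thesis
    proof (cases "norm z \<le> 1")
      case True
      have "a \<ge> 0" "b \<ge> 0" using a_def b_def by auto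
      then show ?thesis using True by linarith
    next
      case False
      then have "b \<le> norm z * b" using b_def by (simp add: mult_le_cancel_right1)
      then have "norm z * norm z \<le> norm z * (a + b)" using q by (simp add: power2_eq_square algebra_simps)
      moreover have "norm z > 0" using False by linarith
      ultimately have "norm z \<le> a + b" by (simp add: mult_le_cancel_left_pos)
      then show ?thesis by simp
    qed
  qed
  have Kcomp: "compact K"
    using Kclosed Kbd by (metis bounded_iff compact_eq_bounded_closed)
  define S where "S p = {z. f (fst p) (snd p) z \<le> 0}" for p
  define I where "I = {p. snd p \<in> G (fst p)}"
  have "K \<inter> (\<Inter>p\<in>I. S p) \<noteq> {}"
  proof (rule compact_imp_fip_image[OF Kcomp])
    show "closed (S p)" for p unfolding S_def
      by (rule closed_Collect_le[OF fcont continuous_on_const])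
  next
    fix I' assume finI': "finite I'" and I'I: "I' \<subseteq> I"
    define T where "T = (\<lambda>p. (fst p, c *\<^sub>R snd p - y)) ` insert (x0, u0) I'"
    have finT: "finite T" using finI' by (simp add: T_def)
    have neT: "T \<noteq> {}" by (simp add: T_def)
    have monT: "\<forall>p\<in>T. \<forall>q\<in>T. inner (snd p - snd q) (fst p - fst q) \<ge> 0"
    proof (intro ballI)
      fix p q assume "p \<in> T" "q \<in> T"
      obtain p' where p': "p' \<in> insert (x0, u0) I'" "p = (fst p', c *\<^sub>R snd p' - y)"
        using \<open>p \<in> T\<close> unfolding T_def by (rule imageE) blast
      obtain q' where q': "q' \<in> insert (x0, u0) I'" "q = (fst q', c *\<^sub>R snd q' - y)"
        using \<open>q \<in> T\<close> unfolding T_def by (rule imageE) blast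
      have "snd p' \<in> G (fst p')" "snd q' \<in> G (fst q')" using p' q' I'I u0 by (auto simp: I_def)
      then have "inner (snd p' - snd q') (fst p' - fst q') \<ge> 0" using mon by (simp add: monotone_op_def)
      then have "c * inner (snd p' - snd q') (fst p' - fst q') \<ge> 0" using c0 by simp
      then show "inner (snd p - snd q) (fst p - fst q) \<ge> 0"
        using p'(2) q'(2) by (simp add: inner_diff_left inner_diff_right algebra_simps)
    qed
    obtain z where hz: "\<forall>p\<in>T. inner (z + snd p) (z - fst p) \<le> 0"
      using finite_minty[OF finT neT monT] by blast
    have "f (fst p) (snd p) z \<le> 0" if "p \<in> insert (x0, u0) I'" for p
    proof -
      have "(fst p, c *\<^sub>R snd p - y) \<in> T" unfolding T_def using that by (rule imageI)
      then show ?thesis using hz unfolding f_def by (force simp: algebra_simps)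
    qed
    then have "z \<in> K \<inter> (\<Inter>p\<in>I'. S p)" by (auto simp: K_def S_def)
    then show "K \<inter> (\<Inter>p\<in>I'. S p) \<noteq> {}" by blast
  qed
  then obtain z where zS: "\<forall>p\<in>I. z \<in> S p" by blast
  have fz: "f x u z \<le> 0" if "u \<in> G x" for x u
    using zS that by (force simp: I_def S_def)
  define v0 where "v0 = (1/c) *\<^sub>R (y - z)"
  define B where "B = G(z := insert v0 (G z))"
  have Bmem: "u \<in> B x \<longleftrightarrow> u \<in> G x \<or> (x = z \<and> u = v0)" for x u
    by (auto simp: B_def)
  have key: "inner (v0 - u) (z - x) \<ge> 0" if "u \<in> G x" for x u
  proof -
    have "c * inner (v0 - u) (z - x) = - f x u z"
      using c0 by (simp add: v0_def f_def inner_diff_left inner_diff_right inner_add_left algebra_simps)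
    then have "c * inner (v0 - u) (z - x) \<ge> 0" using fz[OF that] by simp
    then show ?thesis using c0 by (simp add: zero_le_mult_iff)
  qed
  have "monotone_op B"
    unfolding monotone_op_def
  proof (intro allI impI)
    fix x1 x2 u1 u2 assume h1: "u1 \<in> B x1" and h2: "u2 \<in> B x2"
    show "inner (u1 - u2) (x1 - x2) \<ge> 0"
    proof (cases "u1 \<in> G x1")
      case g1: True
      show ?thesis
      proof (cases "u2 \<in> G x2")
        case True then show ?thesis using g1 mon by (simp add: monotone_op_def)
      next
        case False
        then have "x2 = z" "u2 = v0" using h2 Bmem by auto
        then show ?thesis using key[OF g1] by (simp add: inner_diff_left inner_diff_right algebra_simps)
      qed
    next
      case False
      then have e: "x1 = z" "u1 = v0" using h1 Bmem by auto
      show ?thesis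
      proof (cases "u2 \<in> G x2")
        case True then show ?thesis using key[OF True] e by simp
      next
        case False
        then have "x2 = z" "u2 = v0" using h2 Bmem by auto
        then show ?thesis using e by simp
      qed
    qed
  qed
  moreover have "\<forall>x. G x \<subseteq> B x" by (auto simp: B_def)
  ultimately have "B = G" using mm by (simp add: maximal_monotone_def)
  then have "v0 \<in> G z" by (metis Bmem)
  moreover have "y - z = c *\<^sub>R v0" using c0 by (simp add: v0_def)
  ultimately show ?thesis by (auto simp: scale_op_def)
qed



lemma scale_op_comp: "scale_op a (scale_op b G) = scale_op (a * b) G"
  by (rule ext) (simp add: scale_op_def image_image)

lemma resolvent_unique:
  assumes "\<exists>!z. y - z \<in> A z"
  shows "y - resolvent A y \<in> A (resolvent A y)"
  unfolding resolvent_def using theI'[OF assms] .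

lemma resolvent_eqI:
  assumes "\<exists>!z. y - z \<in> A z" "y - z \<in> A z"
  shows "resolvent A y = z"
  unfolding resolvent_def by (rule the1_equality[OF assms])

lemma scaled_res_unique:
  fixes G :: "'a::euclidean_space \<Rightarrow> 'a set"
  assumes mm: "maximal_monotone G" and c0: "c > 0"
  shows "\<exists>!z. y - z \<in> scale_op c G z"
proof -
  have mon: "monotone_op G" using mm by (simp add: maximal_monotone_def)
  obtain z where z: "y - z \<in> scale_op c G z" using minty[OF mm c0] by blast
  have uq: "z2 = z" if z2: "y - z2 \<in> scale_op c G z2" for z2
  proof -
    obtain v1 where v1: "v1 \<in> G z" "y - z = c *\<^sub>R v1" using z by (auto simp: scale_op_def)
    obtain v2 where v2: "v2 \<in> G z2" "y - z2 = c *\<^sub>R v2" using z2 by (auto simp: scale_op_def)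
    have "inner (v1 - v2) (z - z2) \<ge> 0" using mon v1 v2 by (simp add: monotone_op_def)
    moreover have "c *\<^sub>R (v1 - v2) = z2 - z" using v1 v2 by (simp add: algebra_simps)
    ultimately have "c * inner (v1 - v2) (z - z2) \<ge> 0" using c0 by simp
    then have "inner (c *\<^sub>R (v1 - v2)) (z - z2) \<ge> 0" by simp
    then have "inner (z2 - z) (z - z2) \<ge> 0" using \<open>c *\<^sub>R (v1 - v2) = z2 - z\<close> by simp
    then have "inner (z - z2) (z - z2) \<le> 0"
      by (metis inner_minus_left minus_diff_eq neg_0_le_iff_le)
    then have "inner (z - z2) (z - z2) = 0" by (meson inner_ge_zero order_antisym)
    then show ?thesis by simp
  qed
  show ?thesis
  proof (rule ex1I[where a=z])
    show "y - z \<in> scale_op c G z" by (rule z)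
  next
    fix z2 assume "y - z2 \<in> scale_op c G z2" then show "z2 = z" by (rule uq)
  qed
qed

lemma mem_scale_op: "w \<in> scale_op c G z \<longleftrightarrow> (\<exists>v\<in>G z. w = c *\<^sub>R v)"
  by (auto simp: scale_op_def)

lemma mem_sum_op: "w \<in> sum_op F G z \<longleftrightarrow> (\<exists>v\<in>G z. w = F z + v)"
  by (auto simp: sum_op_def)

lemma scaled_res:
  fixes G :: "'a::euclidean_space \<Rightarrow> 'a set"
  assumes mm: "maximal_monotone G" and c0: "c > 0"
  shows "\<exists>v\<in>G (resolvent (scale_op c G) y). y - resolvent (scale_op c G) y = c *\<^sub>R v"
  using resolvent_unique[OF scaled_res_unique[OF mm c0, of y]] unfolding mem_scale_op by blast

lemma scaled_res_nonexp:
  fixes G :: "'a::euclidean_space \<Rightarrow> 'a set"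
  assumes mm: "maximal_monotone G" and c0: "c > 0"
  shows "norm (resolvent (scale_op c G) y1 - resolvent (scale_op c G) y2) \<le> norm (y1 - y2)"
proof -
  have mon: "monotone_op G" using mm by (simp add: maximal_monotone_def)
  define z1 where "z1 = resolvent (scale_op c G) y1"
  define z2 where "z2 = resolvent (scale_op c G) y2"
  obtain v1 where v1: "v1 \<in> G z1" "y1 - z1 = c *\<^sub>R v1" using scaled_res[OF mm c0, of y1] z1_def by blast
  obtain v2 where v2: "v2 \<in> G z2" "y2 - z2 = c *\<^sub>R v2" using scaled_res[OF mm c0, of y2] z2_def by blast
  have "inner (v1 - v2) (z1 - z2) \<ge> 0" using mon v1 v2 by (simp add: monotone_op_def)
  then have "c * inner (v1 - v2) (z1 - z2) \<ge> 0" using c0 by simp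
  then have "inner (c *\<^sub>R (v1 - v2)) (z1 - z2) \<ge> 0" by simp
  moreover have "c *\<^sub>R (v1 - v2) = (y1 - y2) - (z1 - z2)" using v1 v2 by (simp add: algebra_simps)
  ultimately have "inner ((y1 - y2) - (z1 - z2)) (z1 - z2) \<ge> 0" by simp
  moreover have "inner ((y1 - y2) - (z1 - z2)) (z1 - z2) = inner (y1 - y2) (z1 - z2) - (norm (z1 - z2))\<^sup>2"
    by (simp only: inner_diff_left power2_norm_eq_inner)
  ultimately have "(norm (z1 - z2))\<^sup>2 \<le> inner (y1 - y2) (z1 - z2)" by linarith
  also have "\<dots> \<le> norm (y1 - y2) * norm (z1 - z2)" by (rule norm_cauchy_schwarz)
  finally have nn: "norm (z1 - z2) * norm (z1 - z2) \<le> norm (y1 - y2) * norm (z1 - z2)"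
    by (simp only: power2_eq_square)
  show ?thesis unfolding z1_def[symmetric] z2_def[symmetric]
  proof (cases "norm (z1 - z2) = 0")
    case True
    then show "norm (z1 - z2) \<le> norm (y1 - y2)" by (simp only: True norm_ge_zero)
  next
    case False
    then have "norm (z1 - z2) > 0" by (simp only: zero_less_norm_iff norm_eq_zero not_False_eq_True)
    then show "norm (z1 - z2) \<le> norm (y1 - y2)" using nn
      by (simp only: mult_le_cancel_right_pos)
  qed
qed

lemma lip_inner:
  assumes "L-lipschitz_on UNIV F"
  shows "inner (F a - F b) (a - b) \<ge> - L * (norm (a - b))\<^sup>2"
    and "norm (F a - F b) \<le> L * norm (a - b)"
proof -
  show n: "norm (F a - F b) \<le> L * norm (a - b)"
    using lipschitz_onD[OF assms, of a b] by (simp add: dist_norm)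
  have "\<bar>inner (F a - F b) (a - b)\<bar> \<le> norm (F a - F b) * norm (a - b)" by (rule Cauchy_Schwarz_ineq2)
  also have "\<dots> \<le> L * norm (a - b) * norm (a - b)" using n by (simp add: mult_right_mono)
  finally show "inner (F a - F b) (a - b) \<ge> - L * (norm (a - b))\<^sup>2" by (simp add: power2_eq_square)
qed



lemma mem_eta_sum: "w \<in> scale_op c (sum_op F G) z \<longleftrightarrow> (\<exists>u\<in>G z. w = c *\<^sub>R (F z + u))"
  by (auto simp: scale_op_def sum_op_def)

lemma outer_res:
  fixes F :: "'a::euclidean_space \<Rightarrow> 'a" and G :: "'a \<Rightarrow> 'a set"
  assumes lip: "L-lipschitz_on UNIV F" and mm: "maximal_monotone G"
    and eta: "\<eta> > 0" and etaL: "\<eta> * L < 1"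
  shows "\<exists>u\<in>G (resolvent (scale_op \<eta> (sum_op F G)) x).
           x - resolvent (scale_op \<eta> (sum_op F G)) x = \<eta> *\<^sub>R (F (resolvent (scale_op \<eta> (sum_op F G)) x) + u)"
proof -
  have L0: "L \<ge> 0" using lip by (rule lipschitz_on_nonneg)
  have mon: "monotone_op G" using mm by (simp add: maximal_monotone_def)
  define J where "J y = resolvent (scale_op \<eta> G) y" for y
  define T where "T z = J (x - \<eta> *\<^sub>R F z)" for z
  have contr: "\<forall>z1 z2. dist (T z1) (T z2) \<le> (\<eta> * L) * dist z1 z2"
  proof (intro allI)
    fix z1 z2
    have "dist (T z1) (T z2) \<le> norm ((x - \<eta> *\<^sub>R F z1) - (x - \<eta> *\<^sub>R F z2))"
      unfolding T_def J_def dist_norm by (rule scaled_res_nonexp[OF mm eta])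
    also have "\<dots> = \<eta> * norm (F z1 - F z2)"
      using eta by (simp add: scaleR_diff_right[symmetric] norm_minus_commute)
    also have "\<dots> \<le> \<eta> * (L * norm (z1 - z2))"
      using lip_inner(2)[OF lip, of z1 z2] eta by (simp add: mult_left_mono)
    finally show "dist (T z1) (T z2) \<le> (\<eta> * L) * dist z1 z2" by (simp add: dist_norm mult.assoc)
  qed
  obtain z where Tz: "T z = z"
    using banach_fix_type[OF _ etaL contr] eta L0 by auto
  obtain v where v: "v \<in> G (J (x - \<eta> *\<^sub>R F z))" "(x - \<eta> *\<^sub>R F z) - J (x - \<eta> *\<^sub>R F z) = \<eta> *\<^sub>R v"
    using scaled_res[OF mm eta, of "x - \<eta> *\<^sub>R F z"] unfolding J_def by blast
  have vz: "v \<in> G z" "x - z = \<eta> *\<^sub>R (F z + v)"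
    using v Tz unfolding T_def by (auto simp: algebra_simps)
  have zmem: "x - z \<in> scale_op \<eta> (sum_op F G) z" using vz unfolding mem_eta_sum by blast
  have uq: "z2 = z" if z2: "x - z2 \<in> scale_op \<eta> (sum_op F G) z2" for z2
  proof -
    obtain v2 where v2: "v2 \<in> G z2" "x - z2 = \<eta> *\<^sub>R (F z2 + v2)" using z2 unfolding mem_eta_sum by blast
    have m1: "inner (v - v2) (z - z2) \<ge> 0" using mon vz v2 by (simp add: monotone_op_def)
    have m2: "inner (F z - F z2) (z - z2) \<ge> - L * (norm (z - z2))\<^sup>2" by (rule lip_inner(1)[OF lip])
    have e: "z2 - z = \<eta> *\<^sub>R (F z - F z2) + \<eta> *\<^sub>R (v - v2)"
      using vz v2 by (simp add: algebra_simps)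
    have "- (norm (z - z2))\<^sup>2 = inner (z2 - z) (z - z2)"
      by (simp add: power2_norm_eq_inner inner_diff_left inner_diff_right inner_commute)
    also have "\<dots> = \<eta> * inner (F z - F z2) (z - z2) + \<eta> * inner (v - v2) (z - z2)"
      unfolding e by (simp add: inner_add_left)
    also have "\<dots> \<ge> \<eta> * (- L * (norm (z - z2))\<^sup>2) + 0"
      using m1 m2 eta by (intro add_mono mult_left_mono mult_nonneg_nonneg) auto
    finally have "(1 - \<eta> * L) * (norm (z - z2))\<^sup>2 \<le> 0" by (simp add: algebra_simps)
    moreover have "1 - \<eta> * L > 0" using etaL by simp
    ultimately have "(norm (z - z2))\<^sup>2 \<le> 0" by (simp add: mult_le_0_iff)
    then show ?thesis by simp
  qed
  have ex1: "\<exists>!z. x - z \<in> scale_op \<eta> (sum_op F G) z"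
  proof (rule ex1I[where a=z])
    show "x - z \<in> scale_op \<eta> (sum_op F G) z" by (rule zmem)
  next
    fix z2 assume "x - z2 \<in> scale_op \<eta> (sum_op F G) z2" then show "z2 = z" by (rule uq)
  qed
  have "resolvent (scale_op \<eta> (sum_op F G)) x = z" by (rule resolvent_eqI[OF ex1 zmem])
  then show ?thesis using vz by auto
qed



lemma fbf_counts:
  "snd ((fbf_step z0 A Bin LB ^^ n) (z, a, b)) = (a + 2 * n, b + n)"
proof (induction n)
  case 0 then show ?case by simp
next
  case (Suc n)
  then show ?case
    by (simp add: fbf_step_def Let_def prod_eq_iff)
qed

lemma fbf_oracle: "FBF_oracle_calls z0 N A Bin LB \<le> 2 * N"
  unfolding FBF_oracle_calls_def fbf_run_def Let_def using fbf_counts[where z0=z0 and A=A and Bin=Bin and LB=LB and n=N and z=z0 and a=0 and b=0]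
  by simp

lemma fbf_step_contr:
  fixes F :: "'a::euclidean_space \<Rightarrow> 'a" and G :: "'a \<Rightarrow> 'a set"
  assumes lip: "L-lipschitz_on UNIV F" and mm: "maximal_monotone G"
    and eta: "\<eta> > 0" and etaL: "\<eta> * L < 1"
    and zs: "zs = resolvent (scale_op \<eta> (sum_op F G)) x"
  shows "(norm (fst (fbf_step x (scale_op \<eta> G) (\<lambda>z. z + \<eta> *\<^sub>R F z) (1 + \<eta> * L) s) - zs))\<^sup>2
         \<le> (1 - 3 * ((1 - \<eta> * L) / (1 + \<eta> * L)) / 8) * (norm (fst s - zs))\<^sup>2"
proof -
  have L0: "L \<ge> 0" using lip by (rule lipschitz_on_nonneg)
  have mon: "monotone_op G" using mm by (simp add: maximal_monotone_def)
  obtain us where us: "us \<in> G zs" "x - zs = \<eta> *\<^sub>R (F zs + us)"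
    using outer_res[OF lip mm eta etaL, of x] zs by blast
  define LB where "LB = 1 + \<eta> * L"
  have LB1: "LB \<ge> 1" using L0 eta by (simp add: LB_def)
  define \<tau> where "\<tau> = 1 / (2 * LB)"
  have tau0: "\<tau> > 0" using LB1 by (simp add: \<tau>_def)
  define \<kappa> where "\<kappa> = (1 - \<eta> * L) / (1 + \<eta> * L)"
  have kap: "\<kappa> = 2 * \<tau> * (1 - \<eta> * L)" using LB1 unfolding \<kappa>_def \<tau>_def LB_def[symmetric] by simp
  have kap0: "\<kappa> > 0" using etaL LB1 by (simp add: \<kappa>_def LB_def[symmetric])
  have kap1: "\<kappa> \<le> 1" using LB1 L0 eta by (simp add: \<kappa>_def LB_def[symmetric] divide_le_eq_1) (simp add: LB_def)
  have tauLB: "\<tau> * LB = 1/2" using LB1 by (simp add: \<tau>_def)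
  define B where "B w = w + \<eta> *\<^sub>R F w - x" for w
  define z where "z = fst s"
  define zh where "zh = resolvent (scale_op \<tau> (scale_op \<eta> G)) (z - \<tau> *\<^sub>R B z)"
  have step: "fst (fbf_step x (scale_op \<eta> G) (\<lambda>z. z + \<eta> *\<^sub>R F z) (1 + \<eta> * L) s)
              = zh + \<tau> *\<^sub>R B z - \<tau> *\<^sub>R B zh"
    by (simp add: fbf_step_def Let_def zh_def z_def B_def \<tau>_def LB_def)
  have s0: "\<tau> * \<eta> > 0" using tau0 eta by simp
  obtain v where v: "v \<in> G zh" "(z - \<tau> *\<^sub>R B z) - zh = (\<tau> * \<eta>) *\<^sub>R v"
    using scaled_res[OF mm s0, of "z - \<tau> *\<^sub>R B z"] unfolding zh_def scale_op_comp by blast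
  define p where "p = z - zh"
  define q where "q = zh - zs"
  define d1 where "d1 = B z - B zh"
  define d2 where "d2 = B zh - B zs"
  have Bzs: "B zs = - \<eta> *\<^sub>R us" using us by (simp add: B_def algebra_simps)
  have "inner (v - us) (zh - zs) \<ge> 0" using mon v us by (simp add: monotone_op_def)
  then have "(\<tau> * \<eta>) * inner (v - us) (zh - zs) \<ge> 0" using s0 by simp
  then have "inner ((\<tau> * \<eta>) *\<^sub>R v - (\<tau> * \<eta>) *\<^sub>R us) q \<ge> 0"
    by (simp add: q_def scaleR_diff_right[symmetric])
  moreover have "(\<tau> * \<eta>) *\<^sub>R v - (\<tau> * \<eta>) *\<^sub>R us = p - \<tau> *\<^sub>R d1 - \<tau> *\<^sub>R d2"
    using v(2) Bzs by (simp add: p_def d1_def d2_def algebra_simps)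
  ultimately have I1: "inner p q - \<tau> * inner d1 q - \<tau> * inner d2 q \<ge> 0"
    by (simp add: inner_diff_left)
  have "inner d2 q = (norm q)\<^sup>2 + \<eta> * inner (F zh - F zs) q"
    by (simp add: d2_def q_def B_def power2_norm_eq_inner inner_diff_left inner_add_left algebra_simps)
  moreover have "inner (F zh - F zs) q \<ge> - L * (norm q)\<^sup>2"
    unfolding q_def by (rule lip_inner(1)[OF lip])
  moreover have "\<eta> * inner (F zh - F zs) q \<ge> - (\<eta> * (L * (norm q)\<^sup>2))"
    using mult_left_mono[OF \<open>inner (F zh - F zs) q \<ge> - L * (norm q)\<^sup>2\<close>, of \<eta>] eta by simp
  ultimately have "inner d2 q \<ge> (norm q)\<^sup>2 - \<eta> * (L * (norm q)\<^sup>2)" by linarith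
  then have I2: "\<tau> * inner d2 q \<ge> (\<kappa> / 2) * (norm q)\<^sup>2"
  proof -
    have "\<tau> * inner d2 q \<ge> \<tau> * ((norm q)\<^sup>2 - \<eta> * (L * (norm q)\<^sup>2))"
      using tau0 \<open>inner d2 q \<ge> (norm q)\<^sup>2 - \<eta> * (L * (norm q)\<^sup>2)\<close> by (simp add: mult_left_mono)
    also have "\<tau> * ((norm q)\<^sup>2 - \<eta> * (L * (norm q)\<^sup>2)) = (\<kappa> / 2) * (norm q)\<^sup>2"
      unfolding kap by (simp add: algebra_simps)
    finally show ?thesis .
  qed
  have "norm d1 \<le> norm p + norm (\<eta> *\<^sub>R (F z - F zh))"
    unfolding d1_def p_def B_def by (rule order_trans[OF _ norm_triangle_ineq]) (simp add: algebra_simps)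
  also have "norm (\<eta> *\<^sub>R (F z - F zh)) \<le> \<eta> * (L * norm p)"
    using lip_inner(2)[OF lip, of z zh] eta by (simp add: p_def mult_left_mono)
  finally have "norm d1 \<le> LB * norm p" by (simp add: LB_def algebra_simps)
  then have "(norm d1)\<^sup>2 \<le> (LB * norm p)\<^sup>2" by (simp add: power_mono)
  then have "\<tau>\<^sup>2 * (norm d1)\<^sup>2 \<le> \<tau>\<^sup>2 * (LB * norm p)\<^sup>2" by (simp add: mult_left_mono)
  also have "\<tau>\<^sup>2 * (LB * norm p)\<^sup>2 = (\<tau> * LB)\<^sup>2 * (norm p)\<^sup>2"
    by (simp add: power_mult_distrib)
  also have "\<dots> = (norm p)\<^sup>2 / 4" unfolding tauLB by (simp add: power2_eq_square)
  finally have I3: "\<tau>\<^sup>2 * (norm d1)\<^sup>2 \<le> (norm p)\<^sup>2 / 4" .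
  have znew: "zh + \<tau> *\<^sub>R B z - \<tau> *\<^sub>R B zh - zs = q + \<tau> *\<^sub>R d1"
    by (simp add: q_def d1_def algebra_simps)
  have E1: "(norm (q + \<tau> *\<^sub>R d1))\<^sup>2 = (norm q)\<^sup>2 + 2 * \<tau> * inner d1 q + \<tau>\<^sup>2 * (norm d1)\<^sup>2"
    by (simp only: power2_norm_eq_inner) (simp add: inner_add_left inner_add_right inner_commute power2_eq_square algebra_simps)
  have zz: "fst s - zs = p + q" by (simp add: p_def q_def z_def)
  have E2: "(norm (p + q))\<^sup>2 = (norm p)\<^sup>2 + 2 * inner p q + (norm q)\<^sup>2"
    by (simp only: power2_norm_eq_inner) (simp add: inner_add_left inner_add_right inner_commute algebra_simps)
  have E3: "(norm (p - q))\<^sup>2 = (norm p)\<^sup>2 - 2 * inner p q + (norm q)\<^sup>2"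
    by (simp only: power2_norm_eq_inner) (simp add: inner_diff_left inner_diff_right inner_commute algebra_simps)
  have I4: "(norm (p + q))\<^sup>2 \<le> 2 * (norm p)\<^sup>2 + 2 * (norm q)\<^sup>2"
    using E2 E3 zero_le_power2[of "norm (p - q)"] by linarith
  have I4': "\<kappa> * (norm (p + q))\<^sup>2 \<le> \<kappa> * (2 * (norm p)\<^sup>2 + 2 * (norm q)\<^sup>2)"
    using I4 kap0 by (simp add: mult_left_mono)
  have I5: "\<kappa> * (norm p)\<^sup>2 \<le> (norm p)\<^sup>2" using mult_right_mono[OF kap1 zero_le_power2[of "norm p"]] by simp
  have "(norm (q + \<tau> *\<^sub>R d1))\<^sup>2 \<le> (1 - 3 * \<kappa> / 8) * (norm (p + q))\<^sup>2"
  proof -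
    have kq: "\<kappa> * (norm q)\<^sup>2 \<ge> 0" using kap0 by simp
    have I4'': "\<kappa> * (norm (p + q))\<^sup>2 \<le> 2 * (\<kappa> * (norm p)\<^sup>2) + 2 * (\<kappa> * (norm q)\<^sup>2)"
      using I4' by (simp add: algebra_simps)
    have I2': "\<tau> * inner d2 q \<ge> (\<kappa> * (norm q)\<^sup>2) / 2" using I2 by simp
    have E1': "(norm (q + \<tau> *\<^sub>R d1))\<^sup>2 = (norm q)\<^sup>2 + 2 * (\<tau> * inner d1 q) + \<tau>\<^sup>2 * (norm d1)\<^sup>2"
      using E1 by simp
    have G: "(1 - 3 * \<kappa> / 8) * (norm (p + q))\<^sup>2 = (norm (p + q))\<^sup>2 - 3/8 * (\<kappa> * (norm (p + q))\<^sup>2)"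
      by (simp add: algebra_simps)
    show ?thesis unfolding G using E1' E2 I1 I2' I3 I4'' I5 kq by linarith
  qed
  then show ?thesis unfolding step znew zz \<kappa>_def[symmetric] .
qed



lemma amgm: fixes a b t :: real assumes "t > 0" shows "2 * a * b \<le> t * a\<^sup>2 + b\<^sup>2 / t"
proof -
  have "0 \<le> (t * a - b)\<^sup>2 / t" using assms by simp
  also have "\<dots> = t * a\<^sup>2 + b\<^sup>2 / t - 2 * a * b" using assms
    by (simp add: power2_eq_square field_simps)
  finally show ?thesis by simp
qed

lemma km_step:
  fixes xk xs z y :: "'a::real_inner"
  assumes a0: "0 \<le> \<alpha>" and a1: "\<alpha> \<le> 1"
    and mvi: "inner (xk - z) (z - xs) \<ge> - (1 - \<alpha>) * (norm (xk - z))\<^sup>2"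
    and d0: "\<delta> > 0" and err: "(norm (y - z))\<^sup>2 \<le> \<delta> * (norm (xk - z))\<^sup>2"
  shows "(norm ((1 - \<alpha>) *\<^sub>R xk + \<alpha> *\<^sub>R y - xs))\<^sup>2 \<le> (1 + \<delta>) * (norm (xk - xs))\<^sup>2"
    and "(norm ((1 - \<alpha>) *\<^sub>R xk + \<alpha> *\<^sub>R y - xs))\<^sup>2
          \<le> (1 + 3 * \<delta>) * (norm (xk - xs))\<^sup>2 - (2/3) * \<alpha>\<^sup>2 * (norm (xk - z))\<^sup>2"
proof -
  define r where "r = xk - xs"
  define w where "w = xk - z"
  define e where "e = y - z"
  define h where "h = r - \<alpha> *\<^sub>R w"
  define R where "R = (norm r)\<^sup>2"
  define D where "D = (norm w)\<^sup>2"
  define S where "S = norm h"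
  define E where "E = \<alpha> * norm e"
  have new: "(1 - \<alpha>) *\<^sub>R xk + \<alpha> *\<^sub>R y - xs = h + \<alpha> *\<^sub>R e"
    by (simp add: h_def r_def w_def e_def algebra_simps)
  have rw: "inner w r = D + inner w (z - xs)"
    by (simp add: w_def r_def D_def power2_norm_eq_inner inner_diff_right inner_diff_left algebra_simps)
  have "inner w r \<ge> D - (1 - \<alpha>) * D" using rw mvi unfolding w_def D_def by (simp add: algebra_simps)
  then have iwr: "inner w r \<ge> \<alpha> * D" by (simp add: algebra_simps)
  have "S\<^sup>2 = R - 2 * \<alpha> * inner w r + \<alpha>\<^sup>2 * D"
    unfolding S_def h_def R_def D_def
    by (simp only: power2_norm_eq_inner) (simp add: inner_diff_left inner_diff_right inner_commute power2_eq_square algebra_simps)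
  moreover have "2 * \<alpha> * inner w r \<ge> 2 * \<alpha> * (\<alpha> * D)" using iwr a0 by (simp add: mult_left_mono)
  ultimately have S2: "S\<^sup>2 \<le> R - \<alpha>\<^sup>2 * D" by (simp add: power2_eq_square algebra_simps)
  have N: "(norm (h + \<alpha> *\<^sub>R e))\<^sup>2 = S\<^sup>2 + 2 * \<alpha> * inner h e + \<alpha>\<^sup>2 * (norm e)\<^sup>2"
    unfolding S_def
    by (simp only: power2_norm_eq_inner) (simp add: inner_add_left inner_add_right inner_commute power2_eq_square algebra_simps)
  have "\<alpha> * inner h e \<le> \<alpha> * (S * norm e)" using a0 norm_cauchy_schwarz[of h e] by (simp add: S_def mult_left_mono)
  then have N2: "(norm (h + \<alpha> *\<^sub>R e))\<^sup>2 \<le> S\<^sup>2 + 2 * S * E + E\<^sup>2"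
    using N by (simp add: E_def power_mult_distrib algebra_simps)
  have E2: "E\<^sup>2 \<le> \<alpha>\<^sup>2 * \<delta> * D"
    using err a0 by (simp add: E_def D_def w_def e_def power_mult_distrib mult_left_mono mult.assoc)
  have D0: "D \<ge> 0" by (simp add: D_def)
  show "(norm ((1 - \<alpha>) *\<^sub>R xk + \<alpha> *\<^sub>R y - xs))\<^sup>2 \<le> (1 + \<delta>) * (norm (xk - xs))\<^sup>2"
  proof -
    have am: "2 * S * E \<le> \<delta> * S\<^sup>2 + E\<^sup>2 / \<delta>" by (rule amgm[OF d0])
    have "E\<^sup>2 / \<delta> \<le> \<alpha>\<^sup>2 * D" using E2 d0 by (simp add: divide_le_eq mult.commute mult.left_commute)
    moreover have "(1 + \<delta>) * S\<^sup>2 \<le> (1 + \<delta>) * (R - \<alpha>\<^sup>2 * D)" using S2 d0 by (simp add: mult_left_mono)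
    moreover have "\<alpha>\<^sup>2 * \<delta> * D = \<delta> * (\<alpha>\<^sup>2 * D)" by simp
    ultimately have "S\<^sup>2 + 2 * S * E + E\<^sup>2 \<le> (1 + \<delta>) * R"
      using am E2 by (simp add: algebra_simps)
    then show ?thesis using N2 unfolding new R_def r_def by linarith
  qed
  show "(norm ((1 - \<alpha>) *\<^sub>R xk + \<alpha> *\<^sub>R y - xs))\<^sup>2
          \<le> (1 + 3 * \<delta>) * (norm (xk - xs))\<^sup>2 - (2/3) * \<alpha>\<^sup>2 * (norm (xk - z))\<^sup>2"
  proof -
    have d3: "3 * \<delta> > 0" using d0 by simp
    have am: "2 * S * E \<le> (3 * \<delta>) * S\<^sup>2 + E\<^sup>2 / (3 * \<delta>)" by (rule amgm[OF d3])
    have "E\<^sup>2 / (3 * \<delta>) \<le> \<alpha>\<^sup>2 * D / 3" using E2 d0 by (simp add: divide_le_eq mult.commute mult.left_commute)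
    moreover have "(1 + 3 * \<delta>) * S\<^sup>2 \<le> (1 + 3 * \<delta>) * (R - \<alpha>\<^sup>2 * D)" using S2 d0 by (simp add: mult_left_mono)
    moreover have "\<alpha>\<^sup>2 * \<delta> * D \<ge> 0" using d0 D0 by simp
    ultimately have "S\<^sup>2 + 2 * S * E + E\<^sup>2 \<le> (1 + 3 * \<delta>) * R - (2/3) * \<alpha>\<^sup>2 * D"
      using am E2 by (simp add: algebra_simps)
    then show ?thesis using N2 unfolding new R_def r_def D_def w_def by linarith
  qed
qed



lemma q_aux: "X \<le> (1::real) \<Longrightarrow> 0 \<le> 1 - 3 * X / 8" by linarith

lemma fbf_iter:
  fixes F :: "'a::euclidean_space \<Rightarrow> 'a" and G :: "'a \<Rightarrow> 'a set"
  assumes lip: "L-lipschitz_on UNIV F" and mm: "maximal_monotone G"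
    and eta: "\<eta> > 0" and etaL: "\<eta> * L < 1"
    and zs: "zs = resolvent (scale_op \<eta> (sum_op F G)) x"
  shows "(norm (fst ((fbf_step x (scale_op \<eta> G) (\<lambda>z. z + \<eta> *\<^sub>R F z) (1 + \<eta> * L) ^^ n) s) - zs))\<^sup>2
         \<le> (1 - 3 * ((1 - \<eta> * L) / (1 + \<eta> * L)) / 8) ^ n * (norm (fst s - zs))\<^sup>2"
proof (induction n)
  case 0 then show ?case by simp
next
  case (Suc n)
  have L0: "L \<ge> 0" using lip by (rule lipschitz_on_nonneg)
  define q where "q = 1 - 3 * ((1 - \<eta> * L) / (1 + \<eta> * L)) / 8"
  have pos: "1 + \<eta> * L > 0" using L0 eta by (smt (verit) mult_nonneg_nonneg)
  have "(1 - \<eta> * L) / (1 + \<eta> * L) \<le> 1" using L0 eta pos by (simp add: divide_le_eq_1)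
  then have q0: "q \<ge> 0" unfolding q_def by (rule q_aux)
  define stp where "stp = fbf_step x (scale_op \<eta> G) (\<lambda>z. z + \<eta> *\<^sub>R F z) (1 + \<eta> * L)"
  have "(norm (fst (stp ((stp ^^ n) s)) - zs))\<^sup>2 \<le> q * (norm (fst ((stp ^^ n) s) - zs))\<^sup>2"
    unfolding stp_def q_def by (rule fbf_step_contr[OF lip mm eta etaL zs])
  also have "\<dots> \<le> q * (q ^ n * (norm (fst s - zs))\<^sup>2)"
    by (rule mult_left_mono[OF Suc.IH[unfolded q_def[symmetric] stp_def[symmetric]] q0])
  finally show ?case unfolding q_def[symmetric] stp_def[symmetric] by (simp add: mult.assoc)
qed

lemma fbf_err:
  fixes F :: "'a::euclidean_space \<Rightarrow> 'a" and G :: "'a \<Rightarrow> 'a set"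
  assumes lip: "L-lipschitz_on UNIV F" and mm: "maximal_monotone G"
    and eta: "\<eta> > 0" and etaL: "\<eta> * L < 1"
    and zs: "zs = resolvent (scale_op \<eta> (sum_op F G)) x"
  shows "(norm (FBF x N (scale_op \<eta> G) (\<lambda>z. z + \<eta> *\<^sub>R F z) (1 + \<eta> * L) - zs))\<^sup>2
         \<le> (1 - 3 * ((1 - \<eta> * L) / (1 + \<eta> * L)) / 8) ^ N * (norm (x - zs))\<^sup>2"
  using fbf_iter[OF lip mm eta etaL zs, of N "(x, 0, 0)"] by (simp add: FBF_def fbf_run_def)

definition Mk :: "nat \<Rightarrow> real" where "Mk k = 8 * real (k + 1) * (ln (real (k + 2)))\<^sup>2"
definition dk :: "nat \<Rightarrow> real" where "dk k = 1 / (Mk k * sqrt (Mk k))"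

lemma Mk_lower: "Mk k \<ge> (32/9) * real (k + 1)"
proof -
  have "ln 2 \<le> ln (real (k + 2))" by simp
  then have "2/3 \<le> ln (real (k + 2))" using ln2_ge_two_thirds by linarith
  then have "(2/3)\<^sup>2 \<le> (ln (real (k + 2)))\<^sup>2" by (rule power_mono) simp
  then have "8 * real (k + 1) * (2/3)\<^sup>2 \<le> 8 * real (k + 1) * (ln (real (k + 2)))\<^sup>2"
    by (intro mult_left_mono) auto
  then show ?thesis by (simp add: Mk_def power2_eq_square)
qed

lemma Mk_gt1: "Mk k > 1"
proof -
  have "(32/9) * real (k + 1) \<ge> 32/9" by simp
  then show ?thesis using Mk_lower[of k] by linarith
qed

lemma dk_pos: "dk k > 0" using Mk_gt1[of k] by (simp add: dk_def)

lemma dk_upper: "dk k \<le> (5/32) / (real (k + 1) * sqrt (real (k + 1)))"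
proof -
  define n where "n = real (k + 1)"
  have n1: "n \<ge> 1" by (simp add: n_def)
  have M: "Mk k \<ge> (32/9) * n" using Mk_lower by (simp add: n_def)
  have s1: "sqrt (Mk k) \<ge> sqrt ((32/9) * n)" using M by simp
  have "sqrt ((32/9) * n) = sqrt (32/9) * sqrt n" by (rule real_sqrt_mult)
  moreover have "sqrt (32/9) \<ge> 9/5"
    by (rule real_le_rsqrt) (simp add: power2_eq_square)
  moreover have "sqrt (32/9) * sqrt n \<ge> (9/5) * sqrt n"
    using \<open>sqrt (32/9) \<ge> 9/5\<close> by (rule mult_right_mono) (use n1 in simp)
  ultimately have "sqrt (Mk k) \<ge> (9/5) * sqrt n" using s1 by linarith
  then have "Mk k * sqrt (Mk k) \<ge> ((32/9) * n) * ((9/5) * sqrt n)"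
    using M n1 by (intro mult_mono) auto
  then have "Mk k * sqrt (Mk k) \<ge> (32/5) * (n * sqrt n)" by (simp add: algebra_simps)
  moreover have "n * sqrt n > 0" using n1 by simp
  ultimately have "1 / (Mk k * sqrt (Mk k)) \<le> 1 / ((32/5) * (n * sqrt n))"
    by (intro divide_left_mono) auto
  then show ?thesis by (simp add: dk_def n_def)
qed

lemma rate_bound:
  assumes L0: "L \<ge> 0" and eta: "\<eta> > 0" and etaL: "\<eta> * L < 1"
  shows "(1 - 3 * ((1 - \<eta> * L) / (1 + \<eta> * L)) / 8) ^ (N_inner \<eta> L k) \<le> dk k"
proof -
  define \<kappa> where "\<kappa> = (1 - \<eta> * L) / (1 + \<eta> * L)"
  have pos: "1 + \<eta> * L > 0" using L0 eta by (smt (verit) mult_nonneg_nonneg)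
  have k0: "\<kappa> > 0" using etaL pos unfolding \<kappa>_def by (intro divide_pos_pos) auto
  have k1: "\<kappa> \<le> 1" using L0 eta pos by (simp add: \<kappa>_def divide_le_eq_1)
  define N where "N = N_inner \<eta> L k"
  have c: "4 * (1 + \<eta> * L) / (1 - \<eta> * L) = 4 / \<kappa>" by (simp add: \<kappa>_def)
  have Mdef: "8 * real (k + 1) * (ln (real (k + 2)))\<^sup>2 = Mk k" by (simp add: Mk_def)
  have N: "real N \<ge> 4 / \<kappa> * ln (Mk k)"
    unfolding N_def N_inner_def c Mdef by (rule real_nat_ceiling_ge)
  then have kN: "\<kappa> * real N \<ge> 4 * ln (Mk k)" using k0 by (simp add: pos_divide_le_eq mult.commute)
  define q where "q = 1 - 3 * \<kappa> / 8"
  have q0: "q \<ge> 0" using k1 by (simp add: q_def)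
  have "q \<le> exp (- 3 * \<kappa> / 8)" using exp_ge_add_one_self[of "- 3 * \<kappa> / 8"] by (simp add: q_def)
  then have "q ^ N \<le> exp (- 3 * \<kappa> / 8) ^ N" by (rule power_mono[OF _ q0])
  also have "\<dots> = exp (real N * (- 3 * \<kappa> / 8))" by (rule exp_of_nat_mult[symmetric])
  also have "\<dots> \<le> exp (- (3/2) * ln (Mk k))" using kN by (simp add: algebra_simps)
  also have "exp (- (3/2) * ln (Mk k)) = 1 / (Mk k * sqrt (Mk k))"
  proof -
    have Mp: "Mk k > 0" using Mk_gt1[of k] by simp
    have "exp ((1/2) * ln (Mk k)) = sqrt (Mk k)"
      using powr_half_sqrt[of "Mk k"] Mp by (simp add: powr_def)
    moreover have "exp (ln (Mk k)) = Mk k" using Mp by simp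
    moreover have "exp (- (3/2) * ln (Mk k)) = inverse (exp (ln (Mk k)) * exp ((1/2) * ln (Mk k)))"
      by (simp add: exp_minus[symmetric] exp_add[symmetric] algebra_simps)
    ultimately show ?thesis by (simp add: field_simps)
  qed
  finally show ?thesis unfolding q_def \<kappa>_def N_def dk_def .
qed

lemma sum_sqrt_bound: "k \<ge> 1 \<Longrightarrow> (\<Sum>j<k. 1 / (real (j + 1) * sqrt (real (j + 1)))) \<le> 3 - 2 / sqrt (real k)"
proof (induction k rule: nat_induct_at_least)
  case base then show ?case by simp
next
  case (Suc k)
  define a where "a = sqrt (real k)"
  define b where "b = sqrt (real (k + 1))"
  have a0: "a \<ge> 1" using Suc.hyps by (simp add: a_def)
  have ab: "a \<le> b" by (simp add: a_def b_def)
  have a2: "a\<^sup>2 = real k" by (simp add: a_def)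
  have b2: "b\<^sup>2 = real k + 1" by (simp add: b_def)
  have step: "1 / (real (k + 1) * sqrt (real (k + 1))) \<le> 2 / a - 2 / b"
  proof -
    have bb: "real (k + 1) * sqrt (real (k + 1)) = b * b * b" using b2 by (simp add: b_def power2_eq_square)
    have diff: "(b - a) * (b + a) = 1" using a2 b2 by (simp add: power2_eq_square algebra_simps)
    have "2 / a - 2 / b = 2 * (b - a) / (a * b)" using a0 ab by (simp add: field_simps)
    also have "\<dots> = 2 / (a * b * (b + a))"
    proof -
      have "b - a = 1 / (b + a)" using diff a0 ab by (simp add: field_simps)
      then show ?thesis by simp
    qed
    finally have e: "2 / a - 2 / b = 2 / (a * b * (b + a))" .
    have "a * b * (b + a) \<le> b * b * (2 * b)" using a0 ab
      by (intro mult_mono) auto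
    then have "1 / (b * b * b) \<le> 2 / (a * b * (b + a))" using a0 ab
      by (simp add: divide_simps)
    then show ?thesis unfolding bb e .
  qed
  have "(\<Sum>j<Suc k. 1 / (real (j + 1) * sqrt (real (j + 1))))
        = (\<Sum>j<k. 1 / (real (j + 1) * sqrt (real (j + 1)))) + 1 / (real (k + 1) * sqrt (real (k + 1)))"
    by simp
  also have "\<dots> \<le> 3 - 2 / a + (2 / a - 2 / b)" using Suc.IH step a_def by (intro add_mono) auto
  finally show ?case by (simp add: b_def)
qed

lemma sum_dk: "(\<Sum>j<k. dk j) \<le> 15/32"
proof (cases "k = 0")
  case True then show ?thesis by simp
next
  case False
  have "(\<Sum>j<k. dk j) \<le> (\<Sum>j<k. (5/32) * (1 / (real (j + 1) * sqrt (real (j + 1)))))"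
    using dk_upper by (intro sum_mono) simp
  also have "\<dots> = (5/32) * (\<Sum>j<k. 1 / (real (j + 1) * sqrt (real (j + 1))))"
    by (simp add: sum_distrib_left)
  also have "\<dots> \<le> (5/32) * 3"
  proof -
    have "2 / sqrt (real k) \<ge> 0" by simp
    then have "(\<Sum>j<k. 1 / (real (j + 1) * sqrt (real (j + 1)))) \<le> 3"
      using sum_sqrt_bound[of k] False by linarith
    then show ?thesis by simp
  qed
  finally show ?thesis by simp
qed



theorem theorem3p1:
  fixes F :: "'a::euclidean_space \<Rightarrow> 'a" and G :: "'a \<Rightarrow> 'a set"
    and L \<eta> \<rho> :: real and xstar :: 'a and x :: "nat \<Rightarrow> 'a"
  assumes F_lip: "L-lipschitz_on UNIV F"
    and G_mm: "maximal_monotone G"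
    and rho_pos: "\<rho> > 0"
    and eta_L: "\<eta> * L < 1"
    and rho_eta: "\<rho> < \<eta>"
    and sol: "0 \<in> sum_op F G xstar"
    and wmvi: "\<forall>y u. u \<in> sum_op F G y \<longrightarrow> inner u (y - xstar) \<ge> - \<rho> * (norm u)\<^sup>2"
    and x_rec: "\<forall>k. x (Suc k) =
         (1 - (1 - \<rho> / \<eta>)) *\<^sub>R x k
         + (1 - \<rho> / \<eta>) *\<^sub>R FBF (x k) (N_inner \<eta> L k) (scale_op \<eta> G)
                                  (\<lambda>z. z + \<eta> *\<^sub>R F z) (1 + \<eta> * L)"
  shows "(\<forall>K::nat. K \<ge> 1 \<longrightarrow>
           (1 / real K) * (\<Sum>k<K. (1 / \<eta>\<^sup>2) *
               (norm (x k - resolvent (scale_op \<eta> (sum_op F G)) (x k)))\<^sup>2)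
           \<le> 11 * (norm (x 0 - xstar))\<^sup>2 / ((\<eta> - \<rho>)\<^sup>2 * real K))
       \<and> (\<forall>k. FBF_oracle_calls (x k) (N_inner \<eta> L k) (scale_op \<eta> G)
                (\<lambda>z. z + \<eta> *\<^sub>R F z) (1 + \<eta> * L) \<le> 2 * N_inner \<eta> L k)"
proof
  show "\<forall>k. FBF_oracle_calls (x k) (N_inner \<eta> L k) (scale_op \<eta> G)
                (\<lambda>z. z + \<eta> *\<^sub>R F z) (1 + \<eta> * L) \<le> 2 * N_inner \<eta> L k"
    by (simp add: fbf_oracle)
next
  have L0: "L \<ge> 0" using F_lip by (rule lipschitz_on_nonneg)
  have eta: "\<eta> > 0" using rho_pos rho_eta by linarith
  define \<alpha> where "\<alpha> = 1 - \<rho> / \<eta>"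
  have a0: "\<alpha> > 0" using rho_eta eta by (simp add: \<alpha>_def)
  have a1: "\<alpha> \<le> 1" using rho_pos eta by (simp add: \<alpha>_def)
  have aeta: "\<alpha> * \<eta> = \<eta> - \<rho>" using eta by (simp add: \<alpha>_def algebra_simps)
  define J where "J k = resolvent (scale_op \<eta> (sum_op F G)) (x k)" for k
  define y where "y k = FBF (x k) (N_inner \<eta> L k) (scale_op \<eta> G) (\<lambda>z. z + \<eta> *\<^sub>R F z) (1 + \<eta> * L)" for k
  define R where "R k = (norm (x k - xstar))\<^sup>2" for k
  define D where "D k = (norm (x k - J k))\<^sup>2" for k
  have R0: "R k \<ge> 0" for k by (simp add: R_def)
  have D0: "D k \<ge> 0" for k by (simp add: D_def)
  have xs: "x (Suc k) = (1 - \<alpha>) *\<^sub>R x k + \<alpha> *\<^sub>R y k" for k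
    using x_rec by (simp add: \<alpha>_def y_def)
  have mvi: "inner (x k - J k) (J k - xstar) \<ge> - (1 - \<alpha>) * (norm (x k - J k))\<^sup>2" for k
  proof -
    obtain u where u: "u \<in> G (J k)" "x k - J k = \<eta> *\<^sub>R (F (J k) + u)"
      using outer_res[OF F_lip G_mm eta eta_L, of "x k"] unfolding J_def by blast
    define w where "w = F (J k) + u"
    have "w \<in> sum_op F G (J k)" using u unfolding w_def mem_sum_op by blast
    then have wm: "inner w (J k - xstar) \<ge> - \<rho> * (norm w)\<^sup>2" using wmvi by blast
    have "inner (x k - J k) (J k - xstar) = \<eta> * inner w (J k - xstar)" using u by (simp add: w_def)
    also have "\<dots> \<ge> \<eta> * (- \<rho> * (norm w)\<^sup>2)" using mult_left_mono[OF wm, of \<eta>] eta by simp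
    finally have i1: "inner (x k - J k) (J k - xstar) \<ge> \<eta> * (- \<rho> * (norm w)\<^sup>2)" .
    have "(norm (x k - J k))\<^sup>2 = \<eta>\<^sup>2 * (norm w)\<^sup>2" using u eta by (simp add: w_def power_mult_distrib)
    then have "- (1 - \<alpha>) * (norm (x k - J k))\<^sup>2 = \<eta> * (- \<rho> * (norm w)\<^sup>2)"
      using eta by (simp add: \<alpha>_def power2_eq_square field_simps)
    then show ?thesis using i1 by simp
  qed
  have err: "(norm (y k - J k))\<^sup>2 \<le> dk k * (norm (x k - J k))\<^sup>2" for k
  proof -
    have "(norm (y k - J k))\<^sup>2 \<le> (1 - 3 * ((1 - \<eta> * L) / (1 + \<eta> * L)) / 8) ^ (N_inner \<eta> L k) * (norm (x k - J k))\<^sup>2"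
      unfolding y_def by (rule fbf_err[OF F_lip G_mm eta eta_L J_def])
    also have "\<dots> \<le> dk k * (norm (x k - J k))\<^sup>2"
      by (rule mult_right_mono[OF rate_bound[OF L0 eta eta_L]]) simp
    finally show ?thesis .
  qed
  have stepA: "R (Suc k) \<le> (1 + dk k) * R k" for k
    unfolding R_def xs by (rule km_step(1)[OF less_imp_le[OF a0] a1 mvi dk_pos err])
  have stepB: "R (Suc k) \<le> (1 + 3 * dk k) * R k - (2/3) * \<alpha>\<^sup>2 * D k" for k
    unfolding R_def D_def xs by (rule km_step(2)[OF less_imp_le[OF a0] a1 mvi dk_pos err])
  have Rb: "R k * (1 - (\<Sum>j<k. dk j)) \<le> R 0" for k
  proof (induction k)
    case 0 then show ?case by simp
  next
    case (Suc k)
    define s where "s = (\<Sum>j<k. dk j)"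
    have s1: "s + dk k \<le> 15/32" using sum_dk[of "Suc k"] by (simp add: s_def)
    have s0: "s \<ge> 0" unfolding s_def by (intro sum_nonneg) (simp add: less_imp_le[OF dk_pos])
    have dpos: "dk k > 0" by (rule dk_pos)
    have "R (Suc k) * (1 - (s + dk k)) \<le> ((1 + dk k) * R k) * (1 - (s + dk k))"
      using stepA s1 by (intro mult_right_mono) auto
    also have "\<dots> = R k * ((1 + dk k) * (1 - (s + dk k)))" by simp
    also have "\<dots> \<le> R k * (1 - s)"
    proof (rule mult_left_mono[OF _ R0])
      have "(1 + dk k) * (1 - (s + dk k)) = 1 - s - dk k * (s + dk k)" by (simp add: algebra_simps)
      also have "\<dots> \<le> 1 - s" using dpos s0 by simp
      finally show "(1 + dk k) * (1 - (s + dk k)) \<le> 1 - s" .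
    qed
    also have "\<dots> \<le> R 0" using Suc.IH by (simp add: s_def)
    finally show ?case by (simp add: s_def)
  qed
  have Rk: "R k \<le> (32/17) * R 0" for k
  proof -
    have "1 - (\<Sum>j<k. dk j) \<ge> 17/32" using sum_dk[of k] by simp
    then have "R k * (17/32) \<le> R k * (1 - (\<Sum>j<k. dk j))" by (rule mult_left_mono[OF _ R0])
    then show ?thesis using Rb[of k] by simp
  qed
  have Sb: "(2/3) * \<alpha>\<^sup>2 * (\<Sum>k<K. D k) \<le> R 0 - R K + 3 * (\<Sum>k<K. dk k * R k)" for K
  proof (induction K)
    case 0 then show ?case by simp
  next
    case (Suc K)
    have e1: "(2/3) * \<alpha>\<^sup>2 * (\<Sum>k<Suc K. D k) = (2/3) * \<alpha>\<^sup>2 * (\<Sum>k<K. D k) + (2/3) * \<alpha>\<^sup>2 * D K"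
      by (simp add: algebra_simps)
    have e2: "(\<Sum>k<Suc K. dk k * R k) = (\<Sum>k<K. dk k * R k) + dk K * R K" by simp
    have e3: "(1 + 3 * dk K) * R K = R K + 3 * (dk K * R K)" by (simp add: algebra_simps)
    show ?case unfolding e1 e2 using Suc.IH stepB[of K] e3 by (simp only: mult.assoc distrib_left)
  qed
  have Sd: "(\<Sum>k<K. dk k * R k) \<le> (32/17) * R 0 * (15/32)" for K
  proof -
    have "(\<Sum>k<K. dk k * R k) \<le> (\<Sum>k<K. dk k * ((32/17) * R 0))"
      by (intro sum_mono mult_left_mono[OF Rk]) (simp add: less_imp_le[OF dk_pos])
    also have "\<dots> = (32/17) * R 0 * (\<Sum>k<K. dk k)"
      by (subst sum_distrib_left) (simp add: mult.commute)
    also have "\<dots> \<le> (32/17) * R 0 * (15/32)" by (rule mult_left_mono[OF sum_dk]) (simp add: R0)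
    finally show ?thesis .
  qed
  show "\<forall>K::nat. K \<ge> 1 \<longrightarrow>
           (1 / real K) * (\<Sum>k<K. (1 / \<eta>\<^sup>2) *
               (norm (x k - resolvent (scale_op \<eta> (sum_op F G)) (x k)))\<^sup>2)
           \<le> 11 * (norm (x 0 - xstar))\<^sup>2 / ((\<eta> - \<rho>)\<^sup>2 * real K)"
  proof (intro allI impI)
    fix K :: nat assume K1: "K \<ge> 1"
    have "(2/3) * \<alpha>\<^sup>2 * (\<Sum>k<K. D k) \<le> R 0 + 3 * ((32/17) * R 0 * (15/32))"
      using Sb[of K] Sd[of K] R0[of K] by linarith
    also have "\<dots> = (62/17) * R 0" by simp
    finally have "(2/3) * \<alpha>\<^sup>2 * (\<Sum>k<K. D k) \<le> (62/17) * R 0" .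
    then have "\<alpha>\<^sup>2 * (\<Sum>k<K. D k) \<le> (93/17) * R 0" by (simp add: algebra_simps)
    also have "\<dots> \<le> 11 * R 0" using R0[of 0] by simp
    finally have S1: "\<alpha>\<^sup>2 * (\<Sum>k<K. D k) \<le> 11 * R 0" .
    have "(1 / real K) * (\<Sum>k<K. (1 / \<eta>\<^sup>2) * D k) = (\<alpha>\<^sup>2 * (\<Sum>k<K. D k)) / ((\<alpha> * \<eta>)\<^sup>2 * real K)"
    proof -
      have "(\<Sum>k<K. (1 / \<eta>\<^sup>2) * D k) = (1 / \<eta>\<^sup>2) * (\<Sum>k<K. D k)" by (rule sum_distrib_left[symmetric])
      then show ?thesis using a0 eta K1 by (simp add: power_mult_distrib field_simps)
    qed
    also have "\<dots> \<le> (11 * R 0) / ((\<alpha> * \<eta>)\<^sup>2 * real K)"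
      using S1 a0 eta K1 by (intro divide_right_mono) auto
    finally show "(1 / real K) * (\<Sum>k<K. (1 / \<eta>\<^sup>2) *
               (norm (x k - resolvent (scale_op \<eta> (sum_op F G)) (x k)))\<^sup>2)
           \<le> 11 * (norm (x 0 - xstar))\<^sup>2 / ((\<eta> - \<rho>)\<^sup>2 * real K)"
      unfolding aeta D_def J_def R_def .
  qed
qed

end
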